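(* Let $(b,c)$ be a weighted graph over $V$ with $n(x)>0$ for all $x\in V$, and let $Q=Q_{b,c,n}$ be the associated form on $\ell^2(V,n)$. Then for all $u\in D(Q)$ $$\Big(1-\sqrt{1-\alpha_{b,c,n}^2}\Big)\|u\|_n^2\le Q(u)\le\Big(1+\sqrt{1-\alpha_{b,c,n}^2}\Big)\|u\|_n^2,$$ where $\alpha_{b,c,n}=\alpha_{b,c,n}(V)$.
   Context: Let $V$ be a countably infinite set. A weighted graph over $V$ is a pair $(b,c)$ of maps $b:V\times V\to[0,\infty)$ and $c:V\to[0,\infty)$ with $b(x,x)=0$, $b(x,y)=b(y,x)$ and $\sum_{y\in V}b(x,y)<\infty$ for all $x,y\in V$. Let $n(x)=\sum_y b(x,y)+c(x)$ and $\|u\|_n^2=\sum_x n(x)u(x)^2$. Define $Q^{\max}(u)=\frac12\sum_{x,y}b(x,y)(u(x)-u(y))^2+\sum_x c(x)u(x)^2$; $Q_{b,c,n}$ is the closure in $\ell^2(V,n)$ of the restriction of $Q^{\max}$ to finitely supported functions. For finite $W$ let $|\partial W|=\sum_{x\in W,y\notin W}b(x,y)+\sum_{x\in W}c(x)$, $n(W)=\sum_{x\in W}n(x)$, and $\alpha_{b,c,n}(U)=\inf\{|\partial W|/n(W):\ W\subseteq U\text{ finite, nonempty}\}$. *)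

theory Defs
  imports "HOL-Analysis.Analysis"
begin

definition weighted_graph :: "('v \<Rightarrow> 'v \<Rightarrow> real) \<Rightarrow> ('v \<Rightarrow> real) \<Rightarrow> bool" where
  "weighted_graph b c \<longleftrightarrow>
     (\<forall>x y. b x y \<ge> 0) \<and> (\<forall>x. c x \<ge> 0) \<and> (\<forall>x. b x x = 0) \<and>
     (\<forall>x y. b x y = b y x) \<and> (\<forall>x. (b x) summable_on UNIV)"

definition nweight :: "('v \<Rightarrow> 'v \<Rightarrow> real) \<Rightarrow> ('v \<Rightarrow> real) \<Rightarrow> 'v \<Rightarrow> real" where
  "nweight b c x = (\<Sum>\<^sub>\<infinity>y. b x y) + c x"

definition in_l2 :: "('v \<Rightarrow> real) \<Rightarrow> ('v \<Rightarrow> real) \<Rightarrow> bool" where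
  "in_l2 m u \<longleftrightarrow> (\<lambda>x. m x * (u x)\<^sup>2) summable_on UNIV"

definition norm2 :: "('v \<Rightarrow> real) \<Rightarrow> ('v \<Rightarrow> real) \<Rightarrow> real" where
  "norm2 m u = (\<Sum>\<^sub>\<infinity>x. m x * (u x)\<^sup>2)"

definition Qmax :: "('v \<Rightarrow> 'v \<Rightarrow> real) \<Rightarrow> ('v \<Rightarrow> real) \<Rightarrow> ('v \<Rightarrow> real) \<Rightarrow> real" where
  "Qmax b c u = (1/2) * (\<Sum>\<^sub>\<infinity>(x,y). b x y * (u x - u y)\<^sup>2) + (\<Sum>\<^sub>\<infinity>x. c x * (u x)\<^sup>2)"

definition fin_supp :: "('v \<Rightarrow> real) \<Rightarrow> bool" where
  "fin_supp u \<longleftrightarrow> finite {x. u x \<noteq> 0}"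

text \<open>f is an approximating sequence for u for the closure of Qmax restricted to
  finitely supported functions: finitely supported, converging to u in l^2(V,n),
  and Cauchy with respect to Qmax.\<close>
definition approx_seq :: "('v \<Rightarrow> 'v \<Rightarrow> real) \<Rightarrow> ('v \<Rightarrow> real) \<Rightarrow> (nat \<Rightarrow> 'v \<Rightarrow> real) \<Rightarrow> ('v \<Rightarrow> real) \<Rightarrow> bool" where
  "approx_seq b c f u \<longleftrightarrow>
     (\<forall>k. fin_supp (f k)) \<and> in_l2 (nweight b c) u \<and>
     (\<lambda>k. norm2 (nweight b c) (\<lambda>x. f k x - u x)) \<longlonglongrightarrow> 0 \<and>
     (\<forall>e>0. \<exists>N. \<forall>k\<ge>N. \<forall>j\<ge>N. Qmax b c (\<lambda>x. f k x - f j x) < e)"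

definition form_domain :: "('v \<Rightarrow> 'v \<Rightarrow> real) \<Rightarrow> ('v \<Rightarrow> real) \<Rightarrow> ('v \<Rightarrow> real) set" where
  "form_domain b c = {u. \<exists>f. approx_seq b c f u}"

definition Qform :: "('v \<Rightarrow> 'v \<Rightarrow> real) \<Rightarrow> ('v \<Rightarrow> real) \<Rightarrow> ('v \<Rightarrow> real) \<Rightarrow> real" where
  "Qform b c u = (THE q. \<exists>f. approx_seq b c f u \<and> (\<lambda>k. Qmax b c (f k)) \<longlonglongrightarrow> q)"

definition boundary :: "('v \<Rightarrow> 'v \<Rightarrow> real) \<Rightarrow> ('v \<Rightarrow> real) \<Rightarrow> 'v set \<Rightarrow> real" where
  "boundary b c W = (\<Sum>x\<in>W. \<Sum>\<^sub>\<infinity>y\<in>-W. b x y) + (\<Sum>x\<in>W. c x)"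

definition alpha :: "('v \<Rightarrow> 'v \<Rightarrow> real) \<Rightarrow> ('v \<Rightarrow> real) \<Rightarrow> 'v set \<Rightarrow> real" where
  "alpha b c U = Inf {boundary b c W / (\<Sum>x\<in>W. nweight b c x) | W. W \<subseteq> U \<and> finite W \<and> W \<noteq> {}}"

end

theory Submission
  imports Defs
begin

lemma sq_ineq:
  fixes a b t :: real assumes "t > 0"
  shows "(a+b)^2 \<le> (1+t)*a^2 + (1+1/t)*b^2"
proof -
  have "(1+t)*a^2 + (1+1/t)*b^2 - (a+b)^2 = (t*a - b)^2 / t"
    using assms by (simp add: field_simps power2_eq_square)
  moreover have "(t*a - b)^2 / t \<ge> 0" using assms by simp
  ultimately show ?thesis by linarith
qed

lemma summable_le:
  fixes f g :: "'i \<Rightarrow> real"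
  assumes "\<And>i. 0 \<le> f i" "\<And>i. f i \<le> g i" "g summable_on UNIV"
  shows "f summable_on UNIV"
proof (rule nonneg_bdd_above_summable_on)
  show "bdd_above (sum f ` {F. F \<subseteq> UNIV \<and> finite F})"
  proof (rule bdd_aboveI2)
    fix F :: "'i set" assume "F \<in> {F. F \<subseteq> UNIV \<and> finite F}"
    then have F: "finite F" by auto
    have "sum f F \<le> sum g F" using assms by (intro sum_mono) auto
    also have "\<dots> \<le> infsum g UNIV"
      by (rule finite_sum_le_infsum) (use assms F in \<open>auto intro: order_trans\<close>)
    finally show "sum f F \<le> infsum g UNIV" .
  qed
qed (use assms in auto)

lemma summable_sq_add:
  fixes w a b :: "'i \<Rightarrow> real"
  assumes w: "\<And>i. w i \<ge> 0"
    and sa: "(\<lambda>i. w i * (a i)^2) summable_on UNIV"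
    and sb: "(\<lambda>i. w i * (b i)^2) summable_on UNIV"
  shows "(\<lambda>i. w i * (a i + b i)^2) summable_on UNIV"
proof (rule summable_le)
  show "(\<lambda>i. 2*(w i * (a i)^2) + 2*(w i * (b i)^2)) summable_on UNIV"
    by (intro summable_on_add summable_on_cmult_right sa sb)
  fix i
  show "0 \<le> w i * (a i + b i)^2" using w by simp
  have "(a i + b i)^2 \<le> 2*(a i)^2 + 2*(b i)^2"
    by (smt (verit) zero_le_power2 power2_sum power2_diff)
  hence "w i * (a i + b i)^2 \<le> w i * (2*(a i)^2 + 2*(b i)^2)"
    using w by (intro mult_left_mono) auto
  then show "w i * (a i + b i)^2 \<le> 2*(w i * (a i)^2) + 2*(w i * (b i)^2)"
    by (simp add: algebra_simps)
qed

lemma infsum_sq_add: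
  fixes w a b :: "'i \<Rightarrow> real"
  assumes w: "\<And>i. w i \<ge> 0"
    and sa: "(\<lambda>i. w i * (a i)^2) summable_on UNIV"
    and sb: "(\<lambda>i. w i * (b i)^2) summable_on UNIV"
    and t: "t > 0"
  shows "infsum (\<lambda>i. w i * (a i + b i)^2) UNIV \<le>
     (1+t) * infsum (\<lambda>i. w i * (a i)^2) UNIV + (1+1/t) * infsum (\<lambda>i. w i * (b i)^2) UNIV"
proof -
  have "infsum (\<lambda>i. w i * (a i + b i)^2) UNIV \<le>
        infsum (\<lambda>i. (1+t) * (w i * (a i)^2) + (1+1/t) * (w i * (b i)^2)) UNIV"
  proof (rule infsum_mono)
    show "(\<lambda>i. w i * (a i + b i)^2) summable_on UNIV" by (rule summable_sq_add[OF w sa sb])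
    show "(\<lambda>i. (1+t) * (w i * (a i)^2) + (1+1/t) * (w i * (b i)^2)) summable_on UNIV"
      by (intro summable_on_add summable_on_cmult_right sa sb)
    fix i
    have "w i * (a i + b i)^2 \<le> w i * ((1+t)*(a i)^2 + (1+1/t)*(b i)^2)"
      using w sq_ineq[OF t] by (intro mult_left_mono) auto
    then show "w i * (a i + b i)^2 \<le> (1+t) * (w i * (a i)^2) + (1+1/t) * (w i * (b i)^2)"
      by (simp add: algebra_simps)
  qed
  also have "\<dots> = (1+t) * infsum (\<lambda>i. w i * (a i)^2) UNIV + (1+1/t) * infsum (\<lambda>i. w i * (b i)^2) UNIV"
    by (subst infsum_add) (auto intro!: summable_on_cmult_right sa sb simp: infsum_cmult_right[OF sa] infsum_cmult_right[OF sb])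
  finally show ?thesis .
qed

lemma fatou_sq:
  fixes w :: "'i \<Rightarrow> real" and h :: "nat \<Rightarrow> 'i \<Rightarrow> real"
  assumes w: "\<And>i. w i \<ge> 0"
    and sh: "\<And>j. (\<lambda>i. w i * (h j i)^2) summable_on UNIV"
    and lim: "\<And>i. (\<lambda>j. h j i) \<longlonglongrightarrow> g i"
    and bd: "\<And>j. j \<ge> N \<Longrightarrow> infsum (\<lambda>i. w i * (h j i)^2) UNIV \<le> e"
  shows "(\<lambda>i. w i * (g i)^2) summable_on UNIV \<and> infsum (\<lambda>i. w i * (g i)^2) UNIV \<le> e"
proof -
  have fin: "sum (\<lambda>i. w i * (g i)^2) F \<le> e" if F: "finite F" for F
  proof -
    have "(\<lambda>j. sum (\<lambda>i. w i * (h j i)^2) F) \<longlonglongrightarrow> sum (\<lambda>i. w i * (g i)^2) F"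
      by (intro tendsto_sum tendsto_mult tendsto_const tendsto_power lim)
    moreover have "\<forall>j\<ge>N. sum (\<lambda>i. w i * (h j i)^2) F \<le> e"
    proof (intro allI impI)
      fix j assume "j \<ge> N"
      have "sum (\<lambda>i. w i * (h j i)^2) F \<le> infsum (\<lambda>i. w i * (h j i)^2) UNIV"
        by (rule finite_sum_le_infsum) (use sh F w in auto)
      also have "\<dots> \<le> e" using bd \<open>j \<ge> N\<close> by auto
      finally show "sum (\<lambda>i. w i * (h j i)^2) F \<le> e" .
    qed
    ultimately show ?thesis using LIMSEQ_le_const2 by blast
  qed
  have s: "(\<lambda>i. w i * (g i)^2) summable_on UNIV"
    by (rule nonneg_bdd_above_summable_on) (use w fin in \<open>auto intro!: bdd_aboveI2\<close>)
  moreover have "infsum (\<lambda>i. w i * (g i)^2) UNIV \<le> e"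
    by (rule infsum_le_finite_sums[OF s]) (use fin in auto)
  ultimately show ?thesis by blast
qed

lemma sum_if_subset:
  fixes f :: "'v \<Rightarrow> real"
  assumes "finite S" "P \<subseteq> S"
  shows "(\<Sum>x\<in>S. if x \<in> P then f x else 0) = (\<Sum>x\<in>P. f x)"
proof -
  have "(\<Sum>x\<in>S. if x \<in> P then f x else 0) = (\<Sum>x\<in>S \<inter> P. f x)"
    using assms by (simp add: sum.inter_restrict)
  also have "S \<inter> P = P" using assms by auto
  finally show ?thesis .
qed

lemma coarea:
  fixes b :: "'v \<Rightarrow> 'v \<Rightarrow> real" and cc nn g :: "'v \<Rightarrow> real"
  assumes S: "finite S" and b: "\<And>x y. b x y \<ge> 0" and cc: "\<And>x. x \<in> S \<Longrightarrow> cc x \<ge> 0"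
    and al: "\<alpha> \<ge> 0"
    and hyp: "\<And>W. W \<subseteq> S \<Longrightarrow> \<alpha> * (\<Sum>x\<in>W. nn x) \<le> (\<Sum>x\<in>W. \<Sum>y\<in>S-W. b x y) + (\<Sum>x\<in>W. cc x)"
    and g: "\<And>x. x \<in> S \<Longrightarrow> g x \<ge> 0"
  shows "\<alpha> * (\<Sum>x\<in>S. nn x * g x) \<le> (\<Sum>x\<in>S. \<Sum>y\<in>S. b x y * max (g x - g y) 0) + (\<Sum>x\<in>S. cc x * g x)"
  using g
proof (induction "card {x\<in>S. 0 < g x}" arbitrary: g rule: less_induct)
  case less
  define P where "P = {x\<in>S. 0 < g x}"
  have PS: "P \<subseteq> S" and finP: "finite P" using S by (auto simp: P_def)
  show ?case
  proof (cases "P = {}")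
    case True
    then have g0: "\<And>x. x \<in> S \<Longrightarrow> g x = 0" using less.prems by (force simp: P_def)
    have "(\<Sum>x\<in>S. nn x * g x) = 0" by (simp add: g0)
    moreover have "(\<Sum>x\<in>S. cc x * g x) = 0" by (simp add: g0)
    moreover have "(\<Sum>x\<in>S. \<Sum>y\<in>S. b x y * max (g x - g y) 0) \<ge> 0"
      by (intro sum_nonneg mult_nonneg_nonneg b) auto
    ultimately show ?thesis by simp
  next
    case False
    define m where "m = Min (g ` P)"
    have mP: "m \<in> g ` P" unfolding m_def using False finP by (intro Min_in) auto
    then obtain x0 where x0: "x0 \<in> P" "g x0 = m" by auto
    have mle: "\<And>x. x \<in> P \<Longrightarrow> m \<le> g x" unfolding m_def using finP by auto
    have mpos: "m > 0" using x0 by (auto simp: P_def)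
    define g' where "g' x = (if x \<in> P then g x - m else 0)" for x
    have g'nn: "\<And>x. x \<in> S \<Longrightarrow> g' x \<ge> 0" using mle by (auto simp: g'_def)
    have sub: "{x\<in>S. 0 < g' x} \<subseteq> P - {x0}" using x0 by (auto simp: g'_def P_def split: if_splits)
    have "card {x\<in>S. 0 < g' x} \<le> card (P - {x0})" using finP sub by (intro card_mono) auto
    also have "\<dots> < card P" by (rule card_Diff1_less[OF finP x0(1)])
    finally have IH: "\<alpha> * (\<Sum>x\<in>S. nn x * g' x) \<le> (\<Sum>x\<in>S. \<Sum>y\<in>S. b x y * max (g' x - g' y) 0) + (\<Sum>x\<in>S. cc x * g' x)"
      using less.hyps g'nn unfolding P_def by blast
    have gx: "\<And>x. x \<in> S \<Longrightarrow> g x = (if x \<in> P then m else 0) + g' x"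
      using less.prems by (force simp: g'_def P_def)
    have pt: "max (g x - g y) 0 = (if x \<in> P \<and> y \<notin> P then m else 0) + max (g' x - g' y) 0"
      if "x \<in> S" "y \<in> S" for x y
      using that mle less.prems[of x] less.prems[of y] mpos by (auto simp: g'_def P_def)
    have e1: "(\<Sum>x\<in>S. \<Sum>y\<in>S. b x y * max (g x - g y) 0) =
        m * (\<Sum>x\<in>P. \<Sum>y\<in>S-P. b x y) + (\<Sum>x\<in>S. \<Sum>y\<in>S. b x y * max (g' x - g' y) 0)"
    proof -
      have "(\<Sum>x\<in>S. \<Sum>y\<in>S. b x y * max (g x - g y) 0) =
         (\<Sum>x\<in>S. \<Sum>y\<in>S. (if x \<in> P \<and> y \<notin> P then m * b x y else 0) + b x y * max (g' x - g' y) 0)"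
        by (intro sum.cong refl) (simp add: pt distrib_left)
      also have "\<dots> = (\<Sum>x\<in>S. \<Sum>y\<in>S. (if x \<in> P \<and> y \<notin> P then m * b x y else 0)) + (\<Sum>x\<in>S. \<Sum>y\<in>S. b x y * max (g' x - g' y) 0)"
        by (simp add: sum.distrib)
      also have "(\<Sum>x\<in>S. \<Sum>y\<in>S. (if x \<in> P \<and> y \<notin> P then m * b x y else 0)) =
          (\<Sum>x\<in>S. if x \<in> P then (\<Sum>y\<in>S-P. m * b x y) else 0)"
      proof (intro sum.cong refl)
        fix x assume "x \<in> S"
        have "(\<Sum>y\<in>S. (if x \<in> P \<and> y \<notin> P then m * b x y else 0)) = (\<Sum>y\<in>S. (if y \<in> S - P then (if x \<in> P then m * b x y else 0) else 0))"
          by (intro sum.cong refl) auto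
        also have "\<dots> = (\<Sum>y\<in>S-P. (if x \<in> P then m * b x y else 0))"
          using S by (intro sum_if_subset) auto
        finally show "(\<Sum>y\<in>S. (if x \<in> P \<and> y \<notin> P then m * b x y else 0)) = (if x \<in> P then (\<Sum>y\<in>S-P. m * b x y) else 0)"
          by simp
      qed
      also have "\<dots> = (\<Sum>x\<in>P. \<Sum>y\<in>S-P. m * b x y)" using S PS by (rule sum_if_subset)
      also have "\<dots> = m * (\<Sum>x\<in>P. \<Sum>y\<in>S-P. b x y)" by (simp add: sum_distrib_left)
      finally show ?thesis .
    qed
    have e2: "(\<Sum>x\<in>S. h x * g x) = m * (\<Sum>x\<in>P. h x) + (\<Sum>x\<in>S. h x * g' x)" for h :: "'v \<Rightarrow> real"
    proof -
      have "(\<Sum>x\<in>S. h x * g x) = (\<Sum>x\<in>S. (if x \<in> P then m * h x else 0) + h x * g' x)"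
        by (intro sum.cong refl) (simp add: gx distrib_left distrib_right)
      also have "\<dots> = (\<Sum>x\<in>S. (if x \<in> P then m * h x else 0)) + (\<Sum>x\<in>S. h x * g' x)"
        by (simp add: sum.distrib)
      also have "(\<Sum>x\<in>S. (if x \<in> P then m * h x else 0)) = (\<Sum>x\<in>P. m * h x)"
        using S PS by (rule sum_if_subset)
      finally show ?thesis by (simp add: sum_distrib_left)
    qed
    have H: "\<alpha> * (\<Sum>x\<in>P. nn x) \<le> (\<Sum>x\<in>P. \<Sum>y\<in>S-P. b x y) + (\<Sum>x\<in>P. cc x)"
      using hyp PS by blast
    have "m * (\<alpha> * (\<Sum>x\<in>P. nn x)) \<le> m * ((\<Sum>x\<in>P. \<Sum>y\<in>S-P. b x y) + (\<Sum>x\<in>P. cc x))"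
      using H mpos by (intro mult_left_mono) auto
    then show ?thesis unfolding e1 e2[of nn] e2[of cc] using IH
      by (simp add: algebra_simps)
  qed
qed

lemma weighted_CS:
  fixes w p q :: "'i \<Rightarrow> real"
  assumes w: "\<And>i. i \<in> I \<Longrightarrow> w i \<ge> 0"
  shows "(\<Sum>i\<in>I. w i * p i * q i)^2 \<le> (\<Sum>i\<in>I. w i * (p i)^2) * (\<Sum>i\<in>I. w i * (q i)^2)"
proof -
  have sw: "\<And>i. i \<in> I \<Longrightarrow> (sqrt (w i))^2 = w i" using w by simp
  have "(\<Sum>i\<in>I. (sqrt (w i) * p i) * (sqrt (w i) * q i))^2 \<le>
        (\<Sum>i\<in>I. (sqrt (w i) * p i)^2) * (\<Sum>i\<in>I. (sqrt (w i) * q i)^2)"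
    by (rule Cauchy_Schwarz_ineq_sum)
  moreover have "(\<Sum>i\<in>I. (sqrt (w i) * p i) * (sqrt (w i) * q i)) = (\<Sum>i\<in>I. w i * p i * q i)"
  proof (rule sum.cong[OF refl])
    fix i assume "i \<in> I"
    have "(sqrt (w i) * p i) * (sqrt (w i) * q i) = (sqrt (w i))^2 * p i * q i"
      by (simp add: power2_eq_square)
    then show "(sqrt (w i) * p i) * (sqrt (w i) * q i) = w i * p i * q i" using sw \<open>i \<in> I\<close> by simp
  qed
  moreover have "(\<Sum>i\<in>I. (sqrt (w i) * r i)^2) = (\<Sum>i\<in>I. w i * (r i)^2)" for r
  proof (rule sum.cong[OF refl])
    fix i assume "i \<in> I"
    have "(sqrt (w i) * r i)^2 = (sqrt (w i))^2 * (r i)^2" by (rule power_mult_distrib)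
    then show "(sqrt (w i) * r i)^2 = w i * (r i)^2" using sw \<open>i \<in> I\<close> by simp
  qed
  ultimately show ?thesis by simp
qed

lemma final_alg:
  fixes X Y P1 R1 N Q \<alpha> :: real
  assumes "X \<ge> 0" "Y \<ge> 0" "P1 \<ge> 0" "R1 \<ge> 0" "N \<ge> 0" "0 \<le> \<alpha>" "\<alpha> \<le> 1"
    and "\<alpha> * N \<le> X + Y" "X^2 \<le> P1 * R1" "P1 + R1 + 2*Y = 2*N" "Q = P1 + Y"
  shows "(1 - sqrt (1 - \<alpha>^2)) * N \<le> Q \<and> Q \<le> (1 + sqrt (1 - \<alpha>^2)) * N"
proof -
  have "(2*X)^2 \<le> (P1 + R1)^2"
  proof -
    have "(2*X)^2 = 4 * X^2" by (simp add: power2_eq_square)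
    also have "\<dots> \<le> 4 * (P1*R1)" using assms by simp
    also have "\<dots> \<le> (P1+R1)^2"
    proof -
      have "(P1+R1)^2 - 4*(P1*R1) = (P1-R1)^2" by (simp add: power2_eq_square algebra_simps)
      moreover have "(P1-R1)^2 \<ge> 0" by simp
      ultimately show ?thesis by linarith
    qed
    finally show ?thesis .
  qed
  hence X2: "2*X \<le> P1 + R1" using power2_le_imp_le[of "2*X" "P1+R1"] assms by linarith
  have XY: "2*X*Y \<le> (P1+R1)*Y" using mult_right_mono[OF X2 assms(2)] by simp
  have "(X+Y)^2 \<le> (P1+Y)*(R1+Y)"
  proof -
    have e1: "(X+Y)^2 = X^2 + 2*X*Y + Y^2" by (simp add: power2_sum)
    have e2: "(P1+Y)*(R1+Y) = P1*R1 + (P1+R1)*Y + Y^2" by (simp add: power2_eq_square algebra_simps)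
    show ?thesis unfolding e1 e2 using XY assms(9) by linarith
  qed
  moreover have "(\<alpha>*N)^2 \<le> (X+Y)^2" using power_mono[of "\<alpha>*N" "X+Y" 2] assms by simp
  ultimately have A1: "(\<alpha>*N)^2 \<le> (P1+Y)*(R1+Y)" by linarith
  have A2: "(P1+Y)*(R1+Y) = Q*(2*N - Q)"
  proof -
    have r: "R1 + Y = 2*N - Q" using assms by linarith
    have p: "P1 + Y = Q" using assms by linarith
    show ?thesis by (simp only: r p)
  qed
  have s2: "(sqrt (1 - \<alpha>^2))^2 = 1 - \<alpha>^2"
    using assms by (intro real_sqrt_pow2) (simp add: power_le_one)
  have "(Q - N)^2 = N^2 - Q*(2*N - Q)" by (simp add: power2_eq_square algebra_simps)
  also have "\<dots> \<le> N^2 - (\<alpha>*N)^2" using A1 A2 by linarith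
  also have "\<dots> = (sqrt (1 - \<alpha>^2) * N)^2"
    by (simp only: power_mult_distrib s2) (simp add: algebra_simps)
  finally have "(\<bar>Q - N\<bar>)^2 \<le> (sqrt (1 - \<alpha>^2) * N)^2" by simp
  have "\<bar>Q - N\<bar> \<le> sqrt (1 - \<alpha>^2) * N"
  proof -
    have "1 - \<alpha>^2 \<ge> 0" using assms by (simp add: power_le_one)
    then have sn: "0 \<le> sqrt (1 - \<alpha>^2) * N" using assms by simp
    show ?thesis by (rule power2_le_imp_le[OF \<open>(\<bar>Q - N\<bar>)^2 \<le> (sqrt (1 - \<alpha>^2) * N)^2\<close> sn])
  qed
  then show ?thesis by (simp add: algebra_simps abs_le_iff)
qed

lemma double_sum_swap_sym:
  fixes b :: "'v \<Rightarrow> 'v \<Rightarrow> real" and h :: "'v \<Rightarrow> real"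
  assumes bs: "\<And>x y. b x y = b y x"
  shows "(\<Sum>x\<in>S. \<Sum>y\<in>S. b x y * h y) = (\<Sum>x\<in>S. \<Sum>y\<in>S. b x y * h x)"
proof -
  have "(\<Sum>x\<in>S. \<Sum>y\<in>S. b x y * h y) = (\<Sum>y\<in>S. \<Sum>x\<in>S. b x y * h y)" by (rule sum.swap)
  also have "\<dots> = (\<Sum>y\<in>S. \<Sum>x\<in>S. b y x * h y)" by (simp add: bs)
  finally show ?thesis .
qed

lemma fin_cheeger:
  fixes b :: "'v \<Rightarrow> 'v \<Rightarrow> real" and cc f :: "'v \<Rightarrow> real"
  assumes S: "finite S" and b: "\<And>x y. b x y \<ge> 0" and bs: "\<And>x y. b x y = b y x"
    and cc: "\<And>x. x \<in> S \<Longrightarrow> cc x \<ge> 0"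
    and al: "0 \<le> \<alpha>" "\<alpha> \<le> 1"
    and hyp: "\<And>W. W \<subseteq> S \<Longrightarrow> \<alpha> * (\<Sum>x\<in>W. (\<Sum>y\<in>S. b x y) + cc x) \<le> (\<Sum>x\<in>W. \<Sum>y\<in>S-W. b x y) + (\<Sum>x\<in>W. cc x)"
  shows "(1 - sqrt (1 - \<alpha>^2)) * (\<Sum>x\<in>S. ((\<Sum>y\<in>S. b x y) + cc x) * (f x)^2)
           \<le> (1/2) * (\<Sum>x\<in>S. \<Sum>y\<in>S. b x y * (f x - f y)^2) + (\<Sum>x\<in>S. cc x * (f x)^2)
       \<and> (1/2) * (\<Sum>x\<in>S. \<Sum>y\<in>S. b x y * (f x - f y)^2) + (\<Sum>x\<in>S. cc x * (f x)^2)
           \<le> (1 + sqrt (1 - \<alpha>^2)) * (\<Sum>x\<in>S. ((\<Sum>y\<in>S. b x y) + cc x) * (f x)^2)"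
proof -
  define N where "N = (\<Sum>x\<in>S. ((\<Sum>y\<in>S. b x y) + cc x) * (f x)^2)"
  define Y where "Y = (\<Sum>x\<in>S. cc x * (f x)^2)"
  define X where "X = (\<Sum>x\<in>S. \<Sum>y\<in>S. (b x y / 2) * \<bar>f x - f y\<bar> * \<bar>f x + f y\<bar>)"
  define P1 where "P1 = (\<Sum>x\<in>S. \<Sum>y\<in>S. (b x y / 2) * \<bar>f x - f y\<bar>^2)"
  define R1 where "R1 = (\<Sum>x\<in>S. \<Sum>y\<in>S. (b x y / 2) * \<bar>f x + f y\<bar>^2)"
  define M where "M = (\<Sum>x\<in>S. \<Sum>y\<in>S. b x y * max ((f x)^2 - (f y)^2) 0)"
  have co: "\<alpha> * N \<le> M + Y"
    unfolding N_def M_def Y_def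
    by (rule coarea[where nn = "\<lambda>x. (\<Sum>y\<in>S. b x y) + cc x" and g = "\<lambda>x. (f x)^2", OF S b cc al(1) hyp]) auto
  have MX: "M = X"
  proof -
    have "2 * X = (\<Sum>x\<in>S. \<Sum>y\<in>S. b x y * \<bar>(f x)^2 - (f y)^2\<bar>)"
    proof -
      have "2 * X = (\<Sum>x\<in>S. \<Sum>y\<in>S. 2 * ((b x y / 2) * \<bar>f x - f y\<bar> * \<bar>f x + f y\<bar>))"
        unfolding X_def by (simp add: sum_distrib_left)
      also have "\<dots> = (\<Sum>x\<in>S. \<Sum>y\<in>S. b x y * \<bar>(f x)^2 - (f y)^2\<bar>)"
      proof (intro sum.cong refl)
        fix x y
        have "\<bar>f x - f y\<bar> * \<bar>f x + f y\<bar> = \<bar>(f x)^2 - (f y)^2\<bar>"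
          by (simp add: abs_mult[symmetric] power2_eq_square algebra_simps)
        then show "2 * ((b x y / 2) * \<bar>f x - f y\<bar> * \<bar>f x + f y\<bar>) = b x y * \<bar>(f x)^2 - (f y)^2\<bar>"
          by (simp add: mult.assoc)
      qed
      finally show ?thesis .
    qed
    also have "\<dots> = (\<Sum>x\<in>S. \<Sum>y\<in>S. b x y * max ((f x)^2 - (f y)^2) 0 + b x y * max ((f y)^2 - (f x)^2) 0)"
      by (intro sum.cong refl) (auto simp: max_def distrib_left[symmetric])
    also have "\<dots> = M + (\<Sum>x\<in>S. \<Sum>y\<in>S. b x y * max ((f y)^2 - (f x)^2) 0)"
      unfolding M_def by (simp add: sum.distrib)
    also have "(\<Sum>x\<in>S. \<Sum>y\<in>S. b x y * max ((f y)^2 - (f x)^2) 0) = M"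
    proof -
      have "(\<Sum>x\<in>S. \<Sum>y\<in>S. b x y * max ((f y)^2 - (f x)^2) 0) = (\<Sum>y\<in>S. \<Sum>x\<in>S. b x y * max ((f y)^2 - (f x)^2) 0)"
        by (rule sum.swap)
      also have "\<dots> = (\<Sum>y\<in>S. \<Sum>x\<in>S. b y x * max ((f y)^2 - (f x)^2) 0)" by (simp add: bs)
      finally show ?thesis unfolding M_def .
    qed
    finally show ?thesis by simp
  qed
  have CS: "X^2 \<le> P1 * R1"
  proof -
    have e: "(\<Sum>x\<in>S. \<Sum>y\<in>S. g x y) = (\<Sum>p\<in>S\<times>S. g (fst p) (snd p))" for g :: "'v \<Rightarrow> 'v \<Rightarrow> real"
      by (simp add: sum.cartesian_product split_def)
    show ?thesis unfolding X_def P1_def R1_def e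
      by (rule weighted_CS) (simp add: b)
  qed
  have PR: "P1 + R1 + 2*Y = 2*N"
  proof -
    have "P1 + R1 = (\<Sum>x\<in>S. \<Sum>y\<in>S. b x y * (f x)^2 + b x y * (f y)^2)"
      unfolding P1_def R1_def sum.distrib[symmetric]
      by (intro sum.cong refl) (simp add: power2_eq_square algebra_simps)
    also have "\<dots> = (\<Sum>x\<in>S. \<Sum>y\<in>S. b x y * (f x)^2) + (\<Sum>x\<in>S. \<Sum>y\<in>S. b x y * (f y)^2)"
      by (simp add: sum.distrib)
    also have "(\<Sum>x\<in>S. \<Sum>y\<in>S. b x y * (f y)^2) = (\<Sum>x\<in>S. \<Sum>y\<in>S. b x y * (f x)^2)"
      by (rule double_sum_swap_sym[OF bs])
    finally have "P1 + R1 = 2 * (\<Sum>x\<in>S. (\<Sum>y\<in>S. b x y) * (f x)^2)"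
      by (simp add: sum_distrib_right)
    then show ?thesis unfolding N_def Y_def
      by (simp add: distrib_right sum.distrib)
  qed
  have nn: "X \<ge> 0" "Y \<ge> 0" "P1 \<ge> 0" "R1 \<ge> 0" "N \<ge> 0"
    unfolding X_def Y_def P1_def R1_def N_def using b cc
    by (auto intro!: sum_nonneg mult_nonneg_nonneg add_nonneg_nonneg)
  have Qe: "(1/2) * (\<Sum>x\<in>S. \<Sum>y\<in>S. b x y * (f x - f y)^2) + (\<Sum>x\<in>S. cc x * (f x)^2) = P1 + Y"
    unfolding P1_def Y_def by (simp add: sum_distrib_left)
  show ?thesis unfolding Qe N_def[symmetric]
    by (rule final_alg[OF nn(1,2,3,4,5) al]) (use co MX CS PR in auto)
qed

lemma wg_facts:
  assumes "weighted_graph b c"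
  shows "\<And>x y. b x y \<ge> 0" "\<And>x. c x \<ge> 0" "\<And>x y. b x y = b y x" "\<And>x. (b x) summable_on UNIV"
  using assms unfolding weighted_graph_def by auto

lemma wg_summable_sub:
  assumes "weighted_graph b c"
  shows "(\<lambda>y. k * b x y) summable_on A"
proof -
  have "(b x) summable_on A" using wg_facts(4)[OF assms] summable_on_subset_banach by blast
  then show ?thesis by (rule summable_on_cmult_right)
qed

lemma sum_summable:
  fixes g :: "'i \<Rightarrow> 'a \<Rightarrow> real"
  assumes "finite I" "\<And>i. i \<in> I \<Longrightarrow> g i summable_on A"
  shows "(\<lambda>x. \<Sum>i\<in>I. g i x) summable_on A \<and> infsum (\<lambda>x. \<Sum>i\<in>I. g i x) A = (\<Sum>i\<in>I. infsum (g i) A)"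
  using assms
proof (induction I rule: finite_induct)
  case empty
  then show ?case by simp
next
  case (insert j I)
  have sj: "g j summable_on A" using insert by auto
  have IH: "(\<lambda>x. \<Sum>i\<in>I. g i x) summable_on A \<and> infsum (\<lambda>x. \<Sum>i\<in>I. g i x) A = (\<Sum>i\<in>I. infsum (g i) A)"
    using insert by auto
  have eq: "(\<lambda>x. \<Sum>i\<in>insert j I. g i x) = (\<lambda>x. g j x + (\<Sum>i\<in>I. g i x))"
    using insert by auto
  show ?case unfolding eq using insert IH sj
    by (auto intro!: summable_on_add simp: infsum_add)
qed

lemma inner_in:
  assumes wg: "weighted_graph b c" and S: "finite S" and x: "x \<in> S"
    and f0: "\<And>y. y \<notin> S \<Longrightarrow> f y = 0"
  shows "(\<lambda>y. b x y * (f x - f y)^2) summable_on UNIV \<and>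
         infsum (\<lambda>y. b x y * (f x - f y)^2) UNIV = (\<Sum>y\<in>S. b x y * (f x - f y)^2) + (f x)^2 * infsum (b x) (-S)"
proof -
  have s1: "(\<lambda>y. b x y * (f x - f y)^2) summable_on S" using S by simp
  have s2: "(\<lambda>y. b x y * (f x - f y)^2) summable_on (-S)"
  proof -
    have "(\<lambda>y. (f x)^2 * b x y) summable_on (-S)" by (rule wg_summable_sub[OF wg])
    then show ?thesis by (rule summable_on_cong[THEN iffD1, rotated]) (simp add: f0)
  qed
  have i2: "infsum (\<lambda>y. b x y * (f x - f y)^2) (-S) = (f x)^2 * infsum (b x) (-S)"
  proof -
    have "infsum (\<lambda>y. b x y * (f x - f y)^2) (-S) = infsum (\<lambda>y. (f x)^2 * b x y) (-S)"
      by (rule infsum_cong) (simp add: f0)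
    also have "\<dots> = (f x)^2 * infsum (b x) (-S)"
      using wg_facts(4)[OF wg] summable_on_subset_banach by (intro infsum_cmult_right) blast
    finally show ?thesis .
  qed
  have U: "UNIV = S \<union> -S" by auto
  show ?thesis
    using summable_on_Un_disjoint[OF s1 s2] infsum_Un_disjoint[OF s1 s2] i2 S
    by (simp flip: U)
qed

lemma inner_out:
  assumes wg: "weighted_graph b c" and S: "finite S" and x: "x \<notin> S"
    and f0: "\<And>y. y \<notin> S \<Longrightarrow> f y = 0"
  shows "(\<lambda>y. b x y * (f x - f y)^2) summable_on UNIV \<and>
         infsum (\<lambda>y. b x y * (f x - f y)^2) UNIV = (\<Sum>y\<in>S. b y x * (f y)^2)"
proof -
  have z: "\<And>y. y \<in> UNIV - S \<Longrightarrow> b x y * (f x - f y)^2 = 0" using f0 x by auto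
  have "(\<lambda>y. b x y * (f x - f y)^2) summable_on UNIV"
    using summable_on_cong_neutral[of UNIV S "\<lambda>y. b x y * (f x - f y)^2" "\<lambda>y. b x y * (f x - f y)^2"] z S
    by auto
  moreover have "infsum (\<lambda>y. b x y * (f x - f y)^2) UNIV = infsum (\<lambda>y. b x y * (f x - f y)^2) S"
    by (rule infsum_cong_neutral) (use z in auto)
  moreover have "\<dots> = (\<Sum>y\<in>S. b y x * (f y)^2)"
    using S f0 x wg_facts(3)[OF wg] by simp
  ultimately show ?thesis by simp
qed

lemma pair_sum:
  assumes wg: "weighted_graph b c" and S: "finite S"
    and f0: "\<And>y. y \<notin> S \<Longrightarrow> f y = 0"
  shows "(\<lambda>(x,y). b x y * (f x - f y)^2) summable_on UNIV \<and>
    infsum (\<lambda>(x,y). b x y * (f x - f y)^2) UNIV =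
      (\<Sum>x\<in>S. \<Sum>y\<in>S. b x y * (f x - f y)^2) + 2 * (\<Sum>x\<in>S. (f x)^2 * infsum (b x) (-S))"
proof -
  define F where "F x y = b x y * (f x - f y)^2" for x y
  define G where "G x = infsum (F x) UNIV" for x
  have bnn: "\<And>x y. b x y \<ge> 0" using wg_facts[OF wg] by auto
  have Fnn: "\<And>x y. F x y \<ge> 0" unfolding F_def using bnn by simp
  have sF: "F x summable_on UNIV" for x
  proof (cases "x \<in> S")
    case True
    show ?thesis unfolding F_def by (rule conjunct1[OF inner_in[where f=f, OF wg S \<open>x \<in> S\<close> f0]])
  next
    case False
    show ?thesis unfolding F_def by (rule conjunct1[OF inner_out[where f=f, OF wg S \<open>x \<notin> S\<close> f0]])
  qed
  have GS: "G x = (\<Sum>y\<in>S. b x y * (f x - f y)^2) + (f x)^2 * infsum (b x) (-S)" if "x \<in> S" for x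
    unfolding G_def F_def by (rule conjunct2[OF inner_in[where f=f, OF wg S that f0]])
  have GnS: "G x = (\<Sum>y\<in>S. b y x * (f y)^2)" if "x \<notin> S" for x
    unfolding G_def F_def by (rule conjunct2[OF inner_out[where f=f, OF wg S that f0]])
  have sy: "(\<lambda>x. b y x * (f y)^2) summable_on A" for y A
    by (rule summable_on_cmult_left[OF summable_on_subset_banach[OF wg_facts(4)[OF wg, of y] subset_UNIV]])
  have ss: "(\<lambda>x. \<Sum>y\<in>S. b y x * (f y)^2) summable_on (-S) \<and>
      infsum (\<lambda>x. \<Sum>y\<in>S. b y x * (f y)^2) (-S) = (\<Sum>y\<in>S. infsum (\<lambda>x. b y x * (f y)^2) (-S))"
    by (rule sum_summable[OF S]) (rule sy)
  have sG1: "G summable_on S" using S by simp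
  have sG2: "G summable_on (-S)"
    using summable_on_cong[of "-S" G "\<lambda>x. \<Sum>y\<in>S. b y x * (f y)^2"] GnS conjunct1[OF ss] by auto
  have U: "UNIV = S \<union> -S" by auto
  have sG: "G summable_on UNIV" using summable_on_Un_disjoint[OF sG1 sG2] by (simp flip: U)
  have iG: "infsum G UNIV = (\<Sum>x\<in>S. \<Sum>y\<in>S. b x y * (f x - f y)^2) + 2 * (\<Sum>x\<in>S. (f x)^2 * infsum (b x) (-S))"
  proof -
    have "infsum G UNIV = infsum G S + infsum G (-S)"
      using infsum_Un_disjoint[OF sG1 sG2] by (simp flip: U)
    also have "infsum G S = (\<Sum>x\<in>S. \<Sum>y\<in>S. b x y * (f x - f y)^2) + (\<Sum>x\<in>S. (f x)^2 * infsum (b x) (-S))"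
      using S by (simp add: GS sum.distrib)
    also have "infsum G (-S) = infsum (\<lambda>x. \<Sum>y\<in>S. b y x * (f y)^2) (-S)"
      by (rule infsum_cong) (simp add: GnS)
    also have "\<dots> = (\<Sum>y\<in>S. infsum (\<lambda>x. b y x * (f y)^2) (-S))" using ss by blast
    also have "\<dots> = (\<Sum>y\<in>S. (f y)^2 * infsum (b y) (-S))"
    proof (rule sum.cong[OF refl])
      fix y
      have "infsum (\<lambda>x. b y x * (f y)^2) (-S) = infsum (b y) (-S) * (f y)^2"
        using wg_facts(4)[OF wg] summable_on_subset_banach by (intro infsum_cmult_left) blast
      then show "infsum (\<lambda>x. b y x * (f y)^2) (-S) = (f y)^2 * infsum (b y) (-S)" by simp
    qed
    finally show ?thesis by simp
  qed
  have sumSig: "(\<lambda>(x,y). F x y) summable_on (UNIV \<times> UNIV)"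
  proof -
    have "(\<lambda>p. norm ((\<lambda>(x,y). F x y) p)) summable_on (Sigma UNIV (\<lambda>_. UNIV))"
    proof (subst Infinite_Sum.abs_summable_on_Sigma_iff, intro conjI ballI)
      fix x :: 'a
      show "(\<lambda>y. norm ((\<lambda>(x,y). F x y) (x, y))) summable_on UNIV"
        using sF[of x] Fnn by simp
    next
      have Gn: "G x \<ge> 0" for x unfolding G_def using Fnn by (simp add: infsum_nonneg)
      have "(\<lambda>x. norm (infsum (\<lambda>y. norm ((\<lambda>(x,y). F x y) (x, y))) UNIV)) = G"
      proof
        fix x
        have "infsum (\<lambda>y. norm ((\<lambda>(x,y). F x y) (x, y))) UNIV = G x"
          unfolding G_def using Fnn by simp
        then show "norm (infsum (\<lambda>y. norm ((\<lambda>(x,y). F x y) (x, y))) UNIV) = G x" using Gn[of x] by simp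
      qed
      then show "(\<lambda>x. norm (infsum (\<lambda>y. norm ((\<lambda>(x,y). F x y) (x, y))) UNIV)) summable_on UNIV"
        using sG by simp
    qed
    moreover have "(\<lambda>p. norm ((\<lambda>(x,y). F x y) p)) = (\<lambda>(x,y). F x y)"
      using Fnn by auto
    ultimately show ?thesis by simp
  qed
  have "infsum G UNIV = infsum (\<lambda>(x,y). F x y) (UNIV \<times> UNIV)"
    unfolding G_def by (rule infsum_Sigma'_banach[OF sumSig])
  then show ?thesis using sumSig iG unfolding F_def by simp
qed

lemma qmax_fin:
  assumes wg: "weighted_graph b c" and S: "finite S" and f0: "\<And>y. y \<notin> S \<Longrightarrow> f y = 0"
  shows "Qmax b c f = (1/2) * (\<Sum>x\<in>S. \<Sum>y\<in>S. b x y * (f x - f y)^2) + (\<Sum>x\<in>S. (c x + infsum (b x) (-S)) * (f x)^2)"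
proof -
  have p: "infsum (\<lambda>(x,y). b x y * (f x - f y)^2) UNIV =
      (\<Sum>x\<in>S. \<Sum>y\<in>S. b x y * (f x - f y)^2) + 2 * (\<Sum>x\<in>S. (f x)^2 * infsum (b x) (-S))"
    using pair_sum[where f=f, OF wg S f0] by blast
  have q: "infsum (\<lambda>x. c x * (f x)^2) UNIV = (\<Sum>x\<in>S. c x * (f x)^2)"
  proof -
    have "infsum (\<lambda>x. c x * (f x)^2) UNIV = infsum (\<lambda>x. c x * (f x)^2) S"
      by (rule infsum_cong_neutral) (auto simp: f0)
    then show ?thesis using S by simp
  qed
  show ?thesis unfolding Qmax_def p q
    by (simp add: distrib_right sum.distrib algebra_simps)
qed

lemma norm2_fin:
  assumes S: "finite S" and f0: "\<And>y. y \<notin> S \<Longrightarrow> f y = 0"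
  shows "norm2 m f = (\<Sum>x\<in>S. m x * (f x)^2)"
proof -
  have "infsum (\<lambda>x. m x * (f x)^2) UNIV = infsum (\<lambda>x. m x * (f x)^2) S"
    by (rule infsum_cong_neutral) (auto simp: f0)
  then show ?thesis using S unfolding norm2_def by simp
qed

lemma infsum_split_fin:
  assumes wg: "weighted_graph b c" and S: "finite S" and sub: "S \<subseteq> T" and that: "finite T"
  shows "infsum (b x) (-S) = (\<Sum>y\<in>T-S. b x y) + infsum (b x) (-T)"
proof -
  have s1: "(b x) summable_on (T-S)" using that by simp
  have s2: "(b x) summable_on (-T)" using wg_facts(4)[OF wg] summable_on_subset_banach by blast
  have "-S = (T-S) \<union> -T" using sub by auto
  then have "infsum (b x) (-S) = infsum (b x) ((T-S) \<union> -T)" by simp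
  also have "\<dots> = infsum (b x) (T-S) + infsum (b x) (-T)"
    by (rule infsum_Un_disjoint[OF s1 s2]) auto
  finally show ?thesis using that by simp
qed

lemma nweight_fin:
  assumes wg: "weighted_graph b c" and S: "finite S"
  shows "nweight b c x = (\<Sum>y\<in>S. b x y) + (c x + infsum (b x) (-S))"
proof -
  have "infsum (b x) (-{}) = (\<Sum>y\<in>S-{}. b x y) + infsum (b x) (-S)"
    by (rule infsum_split_fin[OF wg _ _ S]) auto
  then show ?thesis unfolding nweight_def by simp
qed

lemma boundary_fin:
  assumes wg: "weighted_graph b c" and S: "finite S" and W: "W \<subseteq> S"
  shows "boundary b c W = (\<Sum>x\<in>W. \<Sum>y\<in>S-W. b x y) + (\<Sum>x\<in>W. c x + infsum (b x) (-S))"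
proof -
  have fW: "finite W" using S W finite_subset by blast
  have "\<And>x. infsum (b x) (-W) = (\<Sum>y\<in>S-W. b x y) + infsum (b x) (-S)"
    by (rule infsum_split_fin[OF wg fW W S])
  then show ?thesis unfolding boundary_def by (simp add: sum.distrib)
qed

definition aset :: "('v \<Rightarrow> 'v \<Rightarrow> real) \<Rightarrow> ('v \<Rightarrow> real) \<Rightarrow> real set" where
  "aset b c = {boundary b c W / (\<Sum>x\<in>W. nweight b c x) | W. W \<subseteq> UNIV \<and> finite W \<and> W \<noteq> {}}"

lemma alpha_aset: "alpha b c UNIV = Inf (aset b c)"
  unfolding alpha_def aset_def by simp

lemma boundary_nonneg:
  assumes wg: "weighted_graph b c"
  shows "boundary b c W \<ge> 0"
  unfolding boundary_def using wg_facts[OF wg]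
  by (intro add_nonneg_nonneg sum_nonneg infsum_nonneg) auto

lemma aset_nonneg:
  assumes wg: "weighted_graph b c" and npos: "\<forall>x. nweight b c x > 0"
  shows "\<And>t. t \<in> aset b c \<Longrightarrow> t \<ge> 0"
proof -
  fix t assume "t \<in> aset b c"
  then obtain W where t: "t = boundary b c W / (\<Sum>x\<in>W. nweight b c x)" unfolding aset_def by blast
  have "(\<Sum>x\<in>W. nweight b c x) \<ge> 0" by (rule sum_nonneg) (use npos less_imp_le in blast)
  then show "t \<ge> 0" unfolding t by (rule divide_nonneg_nonneg[OF boundary_nonneg[OF wg]])
qed

lemma alpha_le:
  assumes wg: "weighted_graph b c" and npos: "\<forall>x. nweight b c x > 0"
    and W: "finite W" "W \<noteq> {}"
  shows "alpha b c UNIV * (\<Sum>x\<in>W. nweight b c x) \<le> boundary b c W"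
proof -
  have pos: "(\<Sum>x\<in>W. nweight b c x) > 0" using W npos by (intro sum_pos) auto
  have "alpha b c UNIV \<le> boundary b c W / (\<Sum>x\<in>W. nweight b c x)"
    unfolding alpha_aset
  proof (rule cInf_lower)
    show "boundary b c W / (\<Sum>x\<in>W. nweight b c x) \<in> aset b c" unfolding aset_def using W by blast
    show "bdd_below (aset b c)" using aset_nonneg[OF wg npos] by (rule bdd_belowI)
  qed
  then show ?thesis using pos by (simp add: pos_le_divide_eq)
qed

lemma alpha_nonneg:
  assumes wg: "weighted_graph b c" and npos: "\<forall>x. nweight b c x > 0"
  shows "alpha b c UNIV \<ge> 0"
  unfolding alpha_aset
proof (rule cInf_greatest)
  have "boundary b c {undefined} / (\<Sum>x\<in>{undefined}. nweight b c x) \<in> aset b c"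
    unfolding aset_def by blast
  then show "aset b c \<noteq> {}" by blast
  show "\<And>t. t \<in> aset b c \<Longrightarrow> 0 \<le> t" by (rule aset_nonneg[OF wg npos])
qed

lemma alpha_le1:
  assumes wg: "weighted_graph b c" and npos: "\<forall>x. nweight b c x > 0"
  shows "alpha b c UNIV \<le> 1"
proof -
  fix x :: 'a
  have "alpha b c UNIV * nweight b c x \<le> boundary b c {x}"
    using alpha_le[OF wg npos, of "{x}"] by simp
  also have "boundary b c {x} = infsum (b x) (-{x}) + c x" unfolding boundary_def by simp
  also have "\<dots> \<le> nweight b c x"
  proof -
    have "infsum (b x) (-{x}) \<le> infsum (b x) UNIV"
    proof (rule infsum_mono2)
      show "(b x) summable_on (-{x})" by (rule summable_on_subset_banach[OF wg_facts(4)[OF wg]]) simp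
    qed (use wg_facts[OF wg] in auto)
    then show ?thesis unfolding nweight_def by simp
  qed
  finally have "alpha b c UNIV * nweight b c x \<le> 1 * nweight b c x" by simp
  then show ?thesis using npos by (meson mult_le_cancel_right_pos)
qed

lemma cheeger_fin:
  assumes wg: "weighted_graph b c" and npos: "\<forall>x. nweight b c x > 0" and fs: "fin_supp f"
  shows "(1 - sqrt (1 - (alpha b c UNIV)^2)) * norm2 (nweight b c) f \<le> Qmax b c f
       \<and> Qmax b c f \<le> (1 + sqrt (1 - (alpha b c UNIV)^2)) * norm2 (nweight b c) f"
proof -
  define S where "S = {x. f x \<noteq> 0}"
  have S: "finite S" using fs unfolding fin_supp_def S_def .
  have f0: "\<And>y. y \<notin> S \<Longrightarrow> f y = 0" unfolding S_def by auto
  define cc where "cc x = c x + infsum (b x) (-S)" for x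
  define A where "A = alpha b c UNIV"
  have nw: "\<And>x. nweight b c x = (\<Sum>y\<in>S. b x y) + cc x" unfolding cc_def by (rule nweight_fin[OF wg S])
  have ccn: "\<And>x. x \<in> S \<Longrightarrow> cc x \<ge> 0" unfolding cc_def using wg_facts[OF wg]
    by (intro add_nonneg_nonneg infsum_nonneg) auto
  have hyp: "A * (\<Sum>x\<in>W. (\<Sum>y\<in>S. b x y) + cc x) \<le> (\<Sum>x\<in>W. \<Sum>y\<in>S-W. b x y) + (\<Sum>x\<in>W. cc x)"
    if W: "W \<subseteq> S" for W
  proof (cases "W = {}")
    case True
    then show ?thesis by simp
  next
    case False
    have fW: "finite W" using S W finite_subset by blast
    have "A * (\<Sum>x\<in>W. nweight b c x) \<le> boundary b c W"
      unfolding A_def by (rule alpha_le[OF wg npos fW False])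
    then show ?thesis unfolding nw boundary_fin[OF wg S W] cc_def .
  qed
  have fc: "(1 - sqrt (1 - A^2)) * (\<Sum>x\<in>S. ((\<Sum>y\<in>S. b x y) + cc x) * (f x)^2)
           \<le> (1/2) * (\<Sum>x\<in>S. \<Sum>y\<in>S. b x y * (f x - f y)^2) + (\<Sum>x\<in>S. cc x * (f x)^2)
       \<and> (1/2) * (\<Sum>x\<in>S. \<Sum>y\<in>S. b x y * (f x - f y)^2) + (\<Sum>x\<in>S. cc x * (f x)^2)
           \<le> (1 + sqrt (1 - A^2)) * (\<Sum>x\<in>S. ((\<Sum>y\<in>S. b x y) + cc x) * (f x)^2)"
    by (rule fin_cheeger[OF S wg_facts(1)[OF wg] wg_facts(3)[OF wg] ccn
          alpha_nonneg[OF wg npos, folded A_def] alpha_le1[OF wg npos, folded A_def] hyp])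
  have N: "norm2 (nweight b c) f = (\<Sum>x\<in>S. ((\<Sum>y\<in>S. b x y) + cc x) * (f x)^2)"
    using norm2_fin[OF S f0, where m="nweight b c"] nw by simp
  have Q: "Qmax b c f = (1/2) * (\<Sum>x\<in>S. \<Sum>y\<in>S. b x y * (f x - f y)^2) + (\<Sum>x\<in>S. cc x * (f x)^2)"
    unfolding cc_def by (rule qmax_fin[where f=f, OF wg S f0])
  show ?thesis using fc unfolding N Q A_def .
qed

definition bp :: "('v \<Rightarrow> 'v \<Rightarrow> real) \<Rightarrow> 'v \<times> 'v \<Rightarrow> real" where "bp b i = b (fst i) (snd i)"
definition Dg :: "('v \<Rightarrow> real) \<Rightarrow> 'v \<times> 'v \<Rightarrow> real" where "Dg g i = g (fst i) - g (snd i)"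
definition good :: "('v \<Rightarrow> 'v \<Rightarrow> real) \<Rightarrow> ('v \<Rightarrow> real) \<Rightarrow> ('v \<Rightarrow> real) \<Rightarrow> bool" where
  "good b c g \<longleftrightarrow> (\<lambda>i. bp b i * (Dg g i)^2) summable_on UNIV \<and> (\<lambda>x. c x * (g x)^2) summable_on UNIV"
definition PP :: "('v \<Rightarrow> 'v \<Rightarrow> real) \<Rightarrow> ('v \<Rightarrow> real) \<Rightarrow> real" where
  "PP b g = infsum (\<lambda>i. bp b i * (Dg g i)^2) UNIV"
definition CC :: "('v \<Rightarrow> real) \<Rightarrow> ('v \<Rightarrow> real) \<Rightarrow> real" where
  "CC c g = infsum (\<lambda>x. c x * (g x)^2) UNIV"

lemma qmax_eq: "Qmax b c g = (1/2) * PP b g + CC c g"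
  unfolding Qmax_def PP_def CC_def bp_def Dg_def by (simp add: case_prod_unfold)

lemma PP_nonneg: assumes wg: "weighted_graph b c" shows "PP b g \<ge> 0"
  unfolding PP_def bp_def by (intro infsum_nonneg mult_nonneg_nonneg wg_facts(1)[OF wg]) auto

lemma CC_nonneg: assumes wg: "weighted_graph b c" shows "CC c g \<ge> 0"
  unfolding CC_def by (intro infsum_nonneg mult_nonneg_nonneg wg_facts(2)[OF wg]) auto

lemma good_fin:
  assumes wg: "weighted_graph b c" and fs: "fin_supp g"
  shows "good b c g"
proof -
  define S where "S = {x. g x \<noteq> 0}"
  have S: "finite S" using fs unfolding fin_supp_def S_def .
  have g0: "\<And>y. y \<notin> S \<Longrightarrow> g y = 0" unfolding S_def by auto
  have "(\<lambda>(x,y). b x y * (g x - g y)^2) summable_on UNIV"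
    using pair_sum[where f=g, OF wg S g0] by blast
  moreover have "(\<lambda>(x,y). b x y * (g x - g y)^2) = (\<lambda>i. bp b i * (Dg g i)^2)"
    by (simp add: bp_def Dg_def case_prod_unfold)
  moreover have "(\<lambda>x. c x * (g x)^2) summable_on UNIV"
    using summable_on_cong_neutral[of UNIV S "\<lambda>x. c x * (g x)^2" "\<lambda>x. c x * (g x)^2"] S g0 by auto
  ultimately show ?thesis unfolding good_def by simp
qed

lemma qt:
  assumes wg: "weighted_graph b c" and g: "good b c g" and h: "good b c h"
    and z: "\<And>x. z x = g x + h x" and t: "t > 0"
  shows "good b c z \<and> Qmax b c z \<le> (1+t) * Qmax b c g + (1+1/t) * Qmax b c h"
proof -
  have w1: "\<And>i. bp b i \<ge> 0" unfolding bp_def using wg_facts(1)[OF wg] by simp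
  have w2: "\<And>x. c x \<ge> 0" using wg_facts(2)[OF wg] by simp
  have e1: "(\<lambda>i. bp b i * (Dg z i)^2) = (\<lambda>i. bp b i * (Dg g i + Dg h i)^2)"
    by (rule ext) (simp add: Dg_def z algebra_simps)
  have e2: "(\<lambda>x. c x * (z x)^2) = (\<lambda>x. c x * (g x + h x)^2)"
    by (rule ext) (simp add: z)
  have sg1: "(\<lambda>i. bp b i * (Dg g i)^2) summable_on UNIV" and sg2: "(\<lambda>x. c x * (g x)^2) summable_on UNIV"
    using g unfolding good_def by auto
  have sh1: "(\<lambda>i. bp b i * (Dg h i)^2) summable_on UNIV" and sh2: "(\<lambda>x. c x * (h x)^2) summable_on UNIV"
    using h unfolding good_def by auto
  have "good b c z" unfolding good_def e1 e2
    using summable_sq_add[OF w1 sg1 sh1] summable_sq_add[OF w2 sg2 sh2] by blast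
  moreover have "PP b z \<le> (1+t) * PP b g + (1+1/t) * PP b h"
    unfolding PP_def e1 by (rule infsum_sq_add[OF w1 sg1 sh1 t])
  moreover have "CC c z \<le> (1+t) * CC c g + (1+1/t) * CC c h"
    unfolding CC_def e2 by (rule infsum_sq_add[OF w2 sg2 sh2 t])
  ultimately show ?thesis unfolding qmax_eq by (simp add: algebra_simps add_divide_distrib)
qed

lemma good_neg:
  assumes "good b c h"
  shows "good b c (\<lambda>x. - h x) \<and> Qmax b c (\<lambda>x. - h x) = Qmax b c h"
proof -
  have e1: "(\<lambda>i. bp b i * (Dg (\<lambda>x. - h x) i)^2) = (\<lambda>i. bp b i * (Dg h i)^2)"
    by (rule ext) (simp add: Dg_def power2_eq_square algebra_simps)
  have e2: "(\<lambda>x. c x * (- h x)^2) = (\<lambda>x. c x * (h x)^2)" by simp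
  show ?thesis using assms unfolding good_def qmax_eq PP_def CC_def e1 e2 by simp
qed

lemma l2_qt:
  assumes m: "\<And>x. m x \<ge> 0" and g: "in_l2 m g" and h: "in_l2 m h"
    and z: "\<And>x. z x = g x + h x" and t: "t > 0"
  shows "in_l2 m z \<and> norm2 m z \<le> (1+t) * norm2 m g + (1+1/t) * norm2 m h"
proof -
  have e: "(\<lambda>x. m x * (z x)^2) = (\<lambda>x. m x * (g x + h x)^2)" by (rule ext) (simp add: z)
  have sg: "(\<lambda>x. m x * (g x)^2) summable_on UNIV" using g unfolding in_l2_def .
  have sh: "(\<lambda>x. m x * (h x)^2) summable_on UNIV" using h unfolding in_l2_def .
  show ?thesis unfolding in_l2_def norm2_def e
    using summable_sq_add[OF m sg sh] infsum_sq_add[OF m sg sh t] by blast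
qed

lemma l2_neg: "in_l2 m h \<Longrightarrow> in_l2 m (\<lambda>x. - h x) \<and> norm2 m (\<lambda>x. - h x) = norm2 m h"
  unfolding in_l2_def norm2_def by simp

lemma l2_fin: "fin_supp g \<Longrightarrow> in_l2 m g"
proof -
  assume fs: "fin_supp g"
  define S where "S = {x. g x \<noteq> 0}"
  have S: "finite S" using fs unfolding fin_supp_def S_def .
  show ?thesis unfolding in_l2_def
    using summable_on_cong_neutral[of UNIV S "\<lambda>x. m x * (g x)^2" "\<lambda>x. m x * (g x)^2"] S
    by (auto simp: S_def)
qed

lemma gen_conv:
  fixes a \<delta> :: "nat \<Rightarrow> real"
  assumes L: "L \<ge> 0" and d: "\<delta> \<longlonglongrightarrow> 0"
    and bnd: "\<exists>N0. \<forall>k\<ge>N0. \<delta> k \<ge> 0 \<and> (\<forall>t>0. a k \<le> (1+t) * L + (1+1/t) * \<delta> k \<and> L \<le> (1+t) * a k + (1+1/t) * \<delta> k)"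
  shows "a \<longlonglongrightarrow> L"
proof (rule LIMSEQ_I)
  fix r :: real assume r: "r > 0"
  obtain N0 where N0: "\<And>k. k \<ge> N0 \<Longrightarrow> \<delta> k \<ge> 0 \<and> (\<forall>t>0. a k \<le> (1+t) * L + (1+1/t) * \<delta> k \<and> L \<le> (1+t) * a k + (1+1/t) * \<delta> k)"
    using bnd by blast
  define t where "t = r / (2 * (L + 1))"
  have t: "t > 0" unfolding t_def using r L by simp
  have tL: "t * L < r / 2"
  proof -
    have "t * L = r * L / (2 * (L+1))" unfolding t_def by simp
    also have "\<dots> < r / 2" using r L by (simp add: field_simps)
    finally show ?thesis .
  qed
  define C where "C = 1 + 1/t"
  have C: "C > 0" unfolding C_def using t by (simp add: add_pos_pos)
  obtain N1 where N1: "\<And>k. k \<ge> N1 \<Longrightarrow> norm (\<delta> k - 0) < r / (2 * C)"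
    using LIMSEQ_D[OF d, of "r / (2*C)"] r C by auto
  show "\<exists>no. \<forall>n\<ge>no. norm (a n - L) < r"
  proof (intro exI allI impI)
    fix k assume k: "k \<ge> max N0 N1"
    have dk: "\<delta> k \<ge> 0" and b1: "a k \<le> (1+t) * L + C * \<delta> k" and b2: "L \<le> (1+t) * a k + C * \<delta> k"
      using N0[of k] k t unfolding C_def by auto
    have "\<delta> k < r / (2*C)" using N1[of k] k by simp
    hence Cd: "C * \<delta> k < r / 2" using C by (simp add: field_simps)
    have Cd0: "C * \<delta> k \<ge> 0" using C dk by simp
    have up: "a k - L < r" using b1 tL Cd by (simp add: algebra_simps)
    have "(1+t) * (L - t*L - C * \<delta> k) \<le> L - C * \<delta> k"
    proof -
      have "(1+t) * (L - t*L - C * \<delta> k) = L - C * \<delta> k - t*t*L - t * (C * \<delta> k)"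
        by (simp add: algebra_simps)
      moreover have "t*t*L \<ge> 0" using t L by simp
      moreover have "t * (C * \<delta> k) \<ge> 0" using t Cd0 by simp
      ultimately show ?thesis by linarith
    qed
    also have "\<dots> \<le> (1+t) * a k" using b2 by simp
    finally have "L - t*L - C * \<delta> k \<le> a k" using t by simp
    hence lo: "L - a k < r" using tL Cd by linarith
    show "norm (a k - L) < r" using up lo by auto
  qed
qed

lemma pw_conv:
  assumes npos: "\<forall>x. m x > 0" and l2: "\<And>k. in_l2 m (d k)" and lim: "(\<lambda>k. norm2 m (d k)) \<longlonglongrightarrow> 0"
  shows "(\<lambda>k. d k x) \<longlonglongrightarrow> 0"
proof -
  have mx: "m x > 0" using npos by simp
  have le: "m x * (d k x)^2 \<le> norm2 m (d k)" for k
  proof -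
    have "sum (\<lambda>y. m y * (d k y)^2) {x} \<le> infsum (\<lambda>y. m y * (d k y)^2) UNIV"
    proof (rule finite_sum_le_infsum)
      show "(\<lambda>y. m y * (d k y)^2) summable_on UNIV" using l2[of k] unfolding in_l2_def .
      fix y show "0 \<le> m y * (d k y)^2" using npos[rule_format, of y] by simp
    qed auto
    then show ?thesis unfolding norm2_def by simp
  qed
  have "(\<lambda>k. (d k x)^2) \<longlonglongrightarrow> 0"
  proof (rule tendsto_sandwich[of "\<lambda>k. 0" _ _ "\<lambda>k. norm2 m (d k) / m x"])
    show "\<forall>\<^sub>F k in sequentially. 0 \<le> (d k x)^2" by simp
    show "\<forall>\<^sub>F k in sequentially. (d k x)^2 \<le> norm2 m (d k) / m x"
      using le mx by (simp add: pos_le_divide_eq mult.commute)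
    show "(\<lambda>k. 0) \<longlonglongrightarrow> (0::real)" by simp
    show "(\<lambda>k. norm2 m (d k) / m x) \<longlonglongrightarrow> 0" by (rule tendsto_divide_zero[OF lim])
  qed
  then have "(\<lambda>k. sqrt ((d k x)^2)) \<longlonglongrightarrow> sqrt 0" by (rule tendsto_real_sqrt)
  then have "(\<lambda>k. \<bar>d k x\<bar>) \<longlonglongrightarrow> 0" by simp
  then show ?thesis by (simp add: tendsto_rabs_zero_iff)
qed

lemma core:
  assumes wg: "weighted_graph b c" and npos: "\<forall>x. nweight b c x > 0" and ap: "approx_seq b c f u"
  shows "(\<lambda>k. Qmax b c (f k)) \<longlonglongrightarrow> Qmax b c u \<and>
         (\<lambda>k. norm2 (nweight b c) (f k)) \<longlonglongrightarrow> norm2 (nweight b c) u"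
proof -
  define n where "n = nweight b c"
  have fs: "\<And>k. fin_supp (f k)" and ul2: "in_l2 n u"
    and en: "(\<lambda>k. norm2 n (\<lambda>x. f k x - u x)) \<longlonglongrightarrow> 0"
    and cau: "\<And>e. e > 0 \<Longrightarrow> \<exists>N. \<forall>k\<ge>N. \<forall>j\<ge>N. Qmax b c (\<lambda>x. f k x - f j x) < e"
    using ap unfolding approx_seq_def n_def by auto
  have mnn: "\<And>x. n x \<ge> 0" using npos unfolding n_def by (simp add: less_imp_le)
  have npos': "\<forall>x. n x > 0" using npos unfolding n_def by simp
  define d where "d k = (\<lambda>x. f k x - u x)" for k
  have dl2: "in_l2 n (d k)" for k
    using l2_qt[OF mnn l2_fin[OF fs[of k]] conjunct1[OF l2_neg[OF ul2]], of "d k" 1]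
    unfolding d_def by simp
  have en': "(\<lambda>k. norm2 n (d k)) \<longlonglongrightarrow> 0" using en unfolding d_def by simp
  have pw: "(\<lambda>k. f k x) \<longlonglongrightarrow> u x" for x
  proof -
    have "(\<lambda>k. d k x) \<longlonglongrightarrow> 0" by (rule pw_conv[OF npos' dl2 en'])
    then have "(\<lambda>k. d k x + u x) \<longlonglongrightarrow> 0 + u x" by (intro tendsto_add tendsto_const)
    then show ?thesis unfolding d_def by simp
  qed
  have gf: "\<And>k. good b c (f k)" using good_fin[OF wg fs] .
  have Qnn: "\<And>g. Qmax b c g \<ge> 0" unfolding qmax_eq using PP_nonneg[OF wg] CC_nonneg[OF wg]
    by (simp add: add_nonneg_nonneg)
  have key: "\<exists>N. \<forall>k\<ge>N. good b c (d k) \<and> Qmax b c (d k) \<le> 2*e" if e: "e > 0" for e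
  proof -
    obtain N where N: "\<And>k j. k \<ge> N \<Longrightarrow> j \<ge> N \<Longrightarrow> Qmax b c (\<lambda>x. f k x - f j x) < e"
      using cau[OF e] by blast
    have "good b c (d k) \<and> Qmax b c (d k) \<le> 2*e" if k: "k \<ge> N" for k
    proof -
      define h where "h j = (\<lambda>x. f k x - f j x)" for j
      have gh: "good b c (h j)" for j
        using qt[OF wg gf[of k] conjunct1[OF good_neg[OF gf[of j]]], of "h j" 1] unfolding h_def by simp
      have bP: "PP b (h j) \<le> 2*e" and bC: "CC c (h j) \<le> e" if "j \<ge> N" for j
      proof -
        have "Qmax b c (h j) < e" using N[OF k that] unfolding h_def .
        then show "PP b (h j) \<le> 2*e" "CC c (h j) \<le> e" unfolding qmax_eq
          using PP_nonneg[OF wg, of "h j"] CC_nonneg[OF wg, of "h j"] by linarith+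
      qed
      have w1: "\<And>i. bp b i \<ge> 0" unfolding bp_def using wg_facts(1)[OF wg] by simp
      have w2: "\<And>x. c x \<ge> 0" using wg_facts(2)[OF wg] by simp
      have limD: "(\<lambda>j. Dg (h j) i) \<longlonglongrightarrow> Dg (d k) i" for i
        unfolding Dg_def h_def d_def by (intro tendsto_diff tendsto_const pw)
      have limC: "(\<lambda>j. h j x) \<longlonglongrightarrow> d k x" for x
        unfolding h_def d_def by (intro tendsto_diff tendsto_const pw)
      have F1: "(\<lambda>i. bp b i * (Dg (d k) i)^2) summable_on UNIV \<and> infsum (\<lambda>i. bp b i * (Dg (d k) i)^2) UNIV \<le> 2*e"
        by (rule fatou_sq[where h="\<lambda>j. Dg (h j)" and N=N, OF w1])
           (use gh bP limD in \<open>auto simp: good_def PP_def\<close>)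
      have F2: "(\<lambda>x. c x * (d k x)^2) summable_on UNIV \<and> infsum (\<lambda>x. c x * (d k x)^2) UNIV \<le> e"
        by (rule fatou_sq[where h="\<lambda>j. h j" and N=N, OF w2])
           (use gh bC limC in \<open>auto simp: good_def CC_def\<close>)
      show ?thesis using F1 F2 unfolding good_def qmax_eq PP_def CC_def by simp
    qed
    then show ?thesis by blast
  qed
  obtain N1 where N1: "\<And>k. k \<ge> N1 \<Longrightarrow> good b c (d k)" using key[of 1] by auto
  have dlim: "(\<lambda>k. Qmax b c (d k)) \<longlonglongrightarrow> 0"
  proof (rule LIMSEQ_I)
    fix r :: real assume r: "r > 0"
    obtain N where "\<forall>k\<ge>N. good b c (d k) \<and> Qmax b c (d k) \<le> 2*(r/4)" using key[of "r/4"] r by auto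
    then have "\<forall>k\<ge>N. norm (Qmax b c (d k) - 0) < r" using Qnn r by fastforce
    then show "\<exists>no. \<forall>k\<ge>no. norm (Qmax b c (d k) - 0) < r" by blast
  qed
  have gu: "good b c u"
    using qt[OF wg gf[of N1] conjunct1[OF good_neg[OF N1[OF order_refl]]], of u 1] unfolding d_def by simp
  have Qconv: "(\<lambda>k. Qmax b c (f k)) \<longlonglongrightarrow> Qmax b c u"
  proof (rule gen_conv[OF Qnn dlim])
    show "\<exists>N0. \<forall>k\<ge>N0. Qmax b c (d k) \<ge> 0 \<and> (\<forall>t>0. Qmax b c (f k) \<le> (1+t) * Qmax b c u + (1+1/t) * Qmax b c (d k)
        \<and> Qmax b c u \<le> (1+t) * Qmax b c (f k) + (1+1/t) * Qmax b c (d k))"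
    proof (intro exI[of _ N1] allI impI conjI)
      fix k :: nat show "Qmax b c (d k) \<ge> 0" by (rule Qnn)
    next
      fix k :: nat and t :: real assume k: "k \<ge> N1" and t: "t > 0"
      show "Qmax b c (f k) \<le> (1+t) * Qmax b c u + (1+1/t) * Qmax b c (d k)"
        using qt[OF wg gu N1[OF k], of "f k" t] t unfolding d_def by simp
      show "Qmax b c u \<le> (1+t) * Qmax b c (f k) + (1+1/t) * Qmax b c (d k)"
        using qt[OF wg gf[of k] conjunct1[OF good_neg[OF N1[OF k]]], of u t] t
          conjunct2[OF good_neg[OF N1[OF k]]] unfolding d_def by simp
    qed
  qed
  have Nnn: "\<And>g. norm2 n g \<ge> 0" unfolding norm2_def using mnn by (intro infsum_nonneg) simp
  have Nconv: "(\<lambda>k. norm2 n (f k)) \<longlonglongrightarrow> norm2 n u"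
  proof (rule gen_conv[OF Nnn en'])
    show "\<exists>N0. \<forall>k\<ge>N0. norm2 n (d k) \<ge> 0 \<and> (\<forall>t>0. norm2 n (f k) \<le> (1+t) * norm2 n u + (1+1/t) * norm2 n (d k)
        \<and> norm2 n u \<le> (1+t) * norm2 n (f k) + (1+1/t) * norm2 n (d k))"
    proof (intro exI[of _ 0] allI impI conjI)
      fix k :: nat show "norm2 n (d k) \<ge> 0" by (rule Nnn)
    next
      fix k :: nat and t :: real assume t: "t > 0"
      show "norm2 n (f k) \<le> (1+t) * norm2 n u + (1+1/t) * norm2 n (d k)"
        using l2_qt[OF mnn ul2 dl2[of k], of "f k" t] t unfolding d_def by simp
    next
      fix k :: nat and t :: real assume t: "t > 0"
      show "norm2 n u \<le> (1+t) * norm2 n (f k) + (1+1/t) * norm2 n (d k)"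
        using l2_qt[OF mnn l2_fin[OF fs[of k]] conjunct1[OF l2_neg[OF dl2[of k]]], of u t] t
          conjunct2[OF l2_neg[OF dl2[of k]]] unfolding d_def by simp
    qed
  qed
  show ?thesis using Qconv Nconv unfolding n_def by simp
qed

theorem mainTheorem9:
  fixes b :: "'v \<Rightarrow> 'v \<Rightarrow> real" and c :: "'v \<Rightarrow> real"
  assumes "countable (UNIV :: 'v set)" and "infinite (UNIV :: 'v set)"
    and "weighted_graph b c"
    and "\<forall>x. nweight b c x > 0"
    and "u \<in> form_domain b c"
  shows "(1 - sqrt (1 - (alpha b c UNIV)\<^sup>2)) * norm2 (nweight b c) u \<le> Qform b c u
       \<and> Qform b c u \<le> (1 + sqrt (1 - (alpha b c UNIV)\<^sup>2)) * norm2 (nweight b c) u"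
proof -
  note wg = assms(3) and npos = assms(4)
  obtain f where ap: "approx_seq b c f u" using assms(5) unfolding form_domain_def by blast
  have cf: "(\<lambda>k. Qmax b c (f k)) \<longlonglongrightarrow> Qmax b c u" "(\<lambda>k. norm2 (nweight b c) (f k)) \<longlonglongrightarrow> norm2 (nweight b c) u"
    using core[OF wg npos ap] by auto
  have QF: "Qform b c u = Qmax b c u"
    unfolding Qform_def
  proof (rule the_equality)
    show "\<exists>f. approx_seq b c f u \<and> (\<lambda>k. Qmax b c (f k)) \<longlonglongrightarrow> Qmax b c u" using ap cf by blast
    fix q assume "\<exists>f. approx_seq b c f u \<and> (\<lambda>k. Qmax b c (f k)) \<longlonglongrightarrow> q"
    then obtain f' where ap': "approx_seq b c f' u" and l: "(\<lambda>k. Qmax b c (f' k)) \<longlonglongrightarrow> q" by blast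
    show "q = Qmax b c u" using LIMSEQ_unique[OF l] core[OF wg npos ap'] by blast
  qed
  define s where "s = sqrt (1 - (alpha b c UNIV)\<^sup>2)"
  have fs: "\<And>k. fin_supp (f k)" using ap unfolding approx_seq_def by auto
  have ch: "\<And>k. (1 - s) * norm2 (nweight b c) (f k) \<le> Qmax b c (f k) \<and> Qmax b c (f k) \<le> (1 + s) * norm2 (nweight b c) (f k)"
    unfolding s_def by (rule cheeger_fin[OF wg npos fs])
  have lo: "(1 - s) * norm2 (nweight b c) u \<le> Qmax b c u"
    by (rule LIMSEQ_le[OF tendsto_mult_left[OF cf(2)] cf(1)]) (use ch in blast)
  have up: "Qmax b c u \<le> (1 + s) * norm2 (nweight b c) u"
    by (rule LIMSEQ_le[OF cf(1) tendsto_mult_left[OF cf(2)]]) (use ch in blast)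
  show ?thesis using lo up unfolding QF s_def by simp
qed

end
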